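(* Let $a_1,a_2,k_1,k_2>0$ and $b_1,b_2\ge0$ be constants and consider the batch culture system $$\dot x_1=\left(\frac{a_1s}{k_1+s}-b_1\right)x_1,\quad \dot x_2=\left(\frac{a_2s}{k_2+s}-b_2\right)x_2,\quad \dot s=-\frac{a_1s}{k_1+s}x_1-\frac{a_2s}{k_2+s}x_2,\quad (x_1,x_2,s)\in(0,+\infty)^3,$$ with output $y=s$. For every $r>0$: if this system is not strongly observable in time $r$, then $a_1=a_2$, $b_1=b_2$ and $k_1=k_2$.
   Context: Solutions starting in $(0,+\infty)^3$ exist, are unique and remain in $(0,+\infty)^3$ for all $t\ge0$. The (input-free) system is strongly observable in time $r>0$ if for any two distinct initial states in $(0,+\infty)^3$, the $s$-components $s(t),\bar s(t)$ of the corresponding solutions satisfy $\max_{t\in[0,r]}|s(t)-\bar s(t)|>0$. *)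

theory Defs
  imports "HOL-Analysis.Analysis"
begin

definition batch_solution ::
  "real \<Rightarrow> real \<Rightarrow> real \<Rightarrow> real \<Rightarrow> real \<Rightarrow> real \<Rightarrow>
   (real \<Rightarrow> real) \<Rightarrow> (real \<Rightarrow> real) \<Rightarrow> (real \<Rightarrow> real) \<Rightarrow> bool" where
  "batch_solution a1 a2 k1 k2 b1 b2 x1 x2 s \<longleftrightarrow>
     (\<forall>t\<ge>0. x1 t > 0 \<and> x2 t > 0 \<and> s t > 0 \<and>
        (x1 has_real_derivative ((a1 * s t / (k1 + s t) - b1) * x1 t)) (at t within {0..}) \<and>
        (x2 has_real_derivative ((a2 * s t / (k2 + s t) - b2) * x2 t)) (at t within {0..}) \<and>
        (s has_real_derivative (- (a1 * s t / (k1 + s t)) * x1 t - (a2 * s t / (k2 + s t)) * x2 t))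
           (at t within {0..}))"

text \<open>Strong observability in time r (output y = s): any two solutions with distinct
  initial states in (0,+oo)^3 have s-components that differ somewhere on [0,r]
  (equivalently, max over [0,r] of |s - s'| > 0).\<close>
definition strongly_observable ::
  "real \<Rightarrow> real \<Rightarrow> real \<Rightarrow> real \<Rightarrow> real \<Rightarrow> real \<Rightarrow> real \<Rightarrow> bool" where
  "strongly_observable a1 a2 k1 k2 b1 b2 r \<longleftrightarrow>
     (\<forall>x1 x2 s x1' x2' s'.
        batch_solution a1 a2 k1 k2 b1 b2 x1 x2 s \<longrightarrow>
        batch_solution a1 a2 k1 k2 b1 b2 x1' x2' s' \<longrightarrow>
        (x1 0, x2 0, s 0) \<noteq> (x1' 0, x2' 0, s' 0) \<longrightarrow>
        (\<exists>t\<in>{0..r}. s t \<noteq> s' t))"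

end

theory Submission
  imports Defs "HOL-Computational_Algebra.Polynomial"
begin

lemma deriv_eq_open:
  fixes f g :: "real \<Rightarrow> real"
  assumes "open U" "t \<in> U" "\<And>u. u \<in> U \<Longrightarrow> f u = g u"
    "(f has_real_derivative A) (at t)" "(g has_real_derivative B) (at t)"
  shows "A = B"
proof -
  have "(g has_real_derivative A) (at t)"
    by (rule has_field_derivative_transform_within_open[OF assms(4) assms(1,2,3)])
  then show ?thesis using assms(5) by (rule DERIV_unique)
qed

lemma within_to_at:
  fixes f :: "real \<Rightarrow> real"
  assumes "(f has_real_derivative D) (at t within {0..})" "t > 0"
  shows "(f has_real_derivative D) (at t)"
proof -
  have "t \<in> interior {0..}" using assms(2) by simp
  then show ?thesis using assms(1) at_within_interior by metis
qed

lemma poly_zero_inj: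
  fixes p :: "real poly" and S :: "real \<Rightarrow> real"
  assumes "r > 0" "inj_on S {0<..<r}" "\<And>t. t \<in> {0<..<r} \<Longrightarrow> poly p (S t) = 0"
  shows "p = 0"
proof (rule ccontr)
  assume "p \<noteq> 0"
  then have "finite {x. poly p x = 0}" by (rule poly_roots_finite)
  moreover have "S ` {0<..<r} \<subseteq> {x. poly p x = 0}" using assms(3) by auto
  ultimately have "finite (S ` {0<..<r})" by (rule rev_finite_subset)
  then have "finite {0<..<r}" using finite_imageD assms(2) by blast
  then show False using assms(1) infinite_Ioo[of 0 r] by blast
qed

lemma ratio_const:
  fixes X Y S S2 g :: "real \<Rightarrow> real" and r :: real
  assumes XX: "\<And>t. t \<ge> 0 \<Longrightarrow> X t > 0"
    and DX: "\<And>t. t \<ge> 0 \<Longrightarrow> (X has_real_derivative (g (S t)) * X t) (at t within {0..})"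
    and DY: "\<And>t. t \<ge> 0 \<Longrightarrow> (Y has_real_derivative (g (S2 t)) * Y t) (at t within {0..})"
    and eq: "\<And>t. t \<in> {0..r} \<Longrightarrow> S t = S2 t" and r: "r \<ge> 0"
  shows "\<forall>t\<in>{0..r}. Y t = (Y 0 / X 0) * X t"
proof -
  have "\<exists>c. \<forall>t\<in>{0..r}. Y t / X t = c"
  proof (rule has_field_derivative_zero_constant)
    show "convex {0..r}" by simp
    fix t assume t: "t \<in> {0..r}"
    have "((\<lambda>t. Y t / X t) has_real_derivative
       ((g (S2 t) * Y t) * X t - Y t * (g (S t) * X t)) / (X t * X t)) (at t within {0..r})"
    proof (rule DERIV_divide)
      show "(Y has_real_derivative g (S2 t) * Y t) (at t within {0..r})"
        using t by (intro DERIV_subset[OF DY]) auto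
      show "(X has_real_derivative g (S t) * X t) (at t within {0..r})"
        using t by (intro DERIV_subset[OF DX]) auto
      show "X t \<noteq> 0" using t XX[of t] by simp
    qed
    moreover have "((g (S2 t) * Y t) * X t - Y t * (g (S t) * X t)) / (X t * X t) = 0"
      using eq[OF t] by simp
    ultimately show "((\<lambda>t. Y t / X t) has_real_derivative 0) (at t within {0..r})" by simp
  qed
  then obtain c where c: "\<forall>t\<in>{0..r}. Y t / X t = c" by blast
  have "c = Y 0 / X 0" using c r by (metis atLeastAtMost_iff order_refl)
  show ?thesis
  proof
    fix t assume t: "t \<in> {0..r}"
    have "X t > 0" using XX t by simp
    then show "Y t = (Y 0 / X 0) * X t" using c t \<open>c = Y 0 / X 0\<close>
      by (metis nonzero_eq_divide_eq order_less_irrefl)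
  qed
qed


lemma algA1:
  fixes a1 a2 k1 k2 C1 C2 \<sigma> x y :: real
  assumes "\<sigma> > 0" "k1 > 0" "k2 > 0" "C2 \<noteq> 1"
    "(a1 * \<sigma> / (k1 + \<sigma>)) * (1 - C1) * x + (a2 * \<sigma> / (k2 + \<sigma>)) * (1 - C2) * y = 0"
  shows "a2 * y * (k1 + \<sigma>) = (- (1 - C1) / (1 - C2)) * a1 * (k2 + \<sigma>) * x"
proof -
  have "1 - C2 \<noteq> 0" using assms by simp
  have "k1 + \<sigma> > 0" "k2 + \<sigma> > 0" using assms by auto
  have "(k1 + \<sigma>) * (k2 + \<sigma>) \<noteq> 0" using assms by simp
  then have nz: "\<sigma> * \<sigma> + (\<sigma> * k1 + (\<sigma> * k2 + k1 * k2)) \<noteq> 0" by (simp add: algebra_simps)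
  from assms(5) nz have "a1 * \<sigma> * (1 - C1) * x * (k2 + \<sigma>) + a2 * \<sigma> * (1 - C2) * y * (k1 + \<sigma>) = 0"
    using \<open>k1 + \<sigma> > 0\<close> \<open>k2 + \<sigma> > 0\<close> by (simp add: field_simps)
  then have "\<sigma> * (a1 * (1 - C1) * x * (k2 + \<sigma>) + a2 * (1 - C2) * y * (k1 + \<sigma>)) = 0"
    by (simp add: algebra_simps)
  then have "a1 * (1 - C1) * x * (k2 + \<sigma>) + a2 * (1 - C2) * y * (k1 + \<sigma>) = 0"
    using assms(1) by simp
  then show ?thesis using \<open>1 - C2 \<noteq> 0\<close> by (simp add: field_simps)
qed

lemma algA2:
  fixes a1 a2 k1 k2 b1 b2 L \<sigma> x y d :: real
  assumes "\<sigma> > 0" "k1 > 0" "k2 > 0" "a1 > 0" "x > 0" "L > 0"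
    and W: "a2 * y * (k1 + \<sigma>) = L * a1 * (k2 + \<sigma>) * x"
    and E: "a2 * ((a2 * \<sigma> / (k2 + \<sigma>) - b2) * y * (k1 + \<sigma>) + y * d)
            = L * a1 * (d * x + (k2 + \<sigma>) * ((a1 * \<sigma> / (k1 + \<sigma>) - b1) * x))"
  shows "(k1 - k2) * d = (b1 - b2) * (k1 + \<sigma>) * (k2 + \<sigma>) + \<sigma> * (a2 * (k1 + \<sigma>) - a1 * (k2 + \<sigma>))"
proof -
  define u where "u = a1 * \<sigma> / (k1 + \<sigma>)"
  define v where "v = a2 * \<sigma> / (k2 + \<sigma>)"
  define mi where "mi = 1 / (L * a1 * x)"
  have uq: "u * (k1 + \<sigma>) = a1 * \<sigma>" unfolding u_def using assms by simp
  have vq: "v * (k2 + \<sigma>) = a2 * \<sigma>" unfolding v_def using assms by simp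
  have mq: "mi * (L * a1 * x) = 1" unfolding mi_def using assms by simp
  have E': "a2 * ((v - b2) * y * (k1 + \<sigma>) + y * d) = L * a1 * (d * x + (k2 + \<sigma>) * ((u - b1) * x))"
    using E unfolding u_def v_def .
  show ?thesis using uq vq mq E' W by algebra
qed

lemma algA3:
  fixes a1 a2 k1 k2 L \<sigma> x y :: real
  assumes "\<sigma> > 0" "k1 > 0" "k2 > 0"
    and W: "a2 * y * (k1 + \<sigma>) = L * a1 * (k2 + \<sigma>) * x"
  shows "a2 * \<sigma> / (k2 + \<sigma>) * y = L * (a1 * \<sigma> / (k1 + \<sigma>)) * x"
proof -
  have p1: "k1 + \<sigma> > 0" "k2 + \<sigma> > 0" using assms by auto
  have "a2 * \<sigma> * y * (k1 + \<sigma>) = L * a1 * \<sigma> * x * (k2 + \<sigma>)"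
    using W by (metis mult.assoc mult.commute)
  then show ?thesis using p1 by (simp add: field_simps)
qed

lemma algA4:
  fixes a1 b1 k1 c L \<sigma> x d p q :: real
  assumes "\<sigma> > 0" "k1 > 0" "a1 > 0" "x > 0" "L > 0" "c \<noteq> 0"
    and H1: "d = - (1 + L) * (a1 * \<sigma> / (k1 + \<sigma>)) * x"
    and H2: "c * d = p"
    and H3: "- (1 + L) * (a1 * \<sigma> / (k1 + \<sigma>) * ((a1 * \<sigma> / (k1 + \<sigma>) - b1) * x)
               + (a1 * d * (k1 + \<sigma>) - a1 * \<sigma> * (0 + d)) / ((k1 + \<sigma>) * (k1 + \<sigma>)) * x) = q * d / c"
  shows "k1 * p + c * a1 * \<sigma>^2 - c * b1 * \<sigma> * (k1 + \<sigma>) - \<sigma> * (k1 + \<sigma>) * q = 0"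
proof -
  define u where "u = a1 * \<sigma> / (k1 + \<sigma>)"
  define w where "w = 1 / (k1 + \<sigma>)"
  define ci where "ci = 1 / c"
  have uq: "u * (k1 + \<sigma>) = a1 * \<sigma>" unfolding u_def using assms by simp
  have wq: "w * (k1 + \<sigma>) = 1" unfolding w_def using assms by simp
  have cq: "c * ci = 1" unfolding ci_def using assms by simp
  have u0: "u > 0" unfolding u_def using assms by simp
  have dne: "d \<noteq> 0" using H1 u0 assms unfolding u_def[symmetric] by simp
  define di where "di = 1 / d"
  have dq: "d * di = 1" unfolding di_def using dne by simp
  define si where "si = 1 / \<sigma>"
  have sq: "\<sigma> * si = 1" unfolding si_def using assms by simp
  have e1: "(a1 * d * (k1 + \<sigma>) - a1 * \<sigma> * (0 + d)) / ((k1 + \<sigma>) * (k1 + \<sigma>))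
      = (a1 * d * (k1 + \<sigma>) - a1 * \<sigma> * d) * w * w" unfolding w_def by simp
  have e2: "q * d / c = q * d * ci" unfolding ci_def by simp
  have H3': "- (1 + L) * (u * ((u - b1) * x) + (a1 * d * (k1 + \<sigma>) - a1 * \<sigma> * d) * w * w * x) = q * d * ci"
    using H3 unfolding e1 e2 u_def .
  have H1': "d = - (1 + L) * u * x" using H1 unfolding u_def .
  show ?thesis using uq wq cq dq sq H1' H2 H3' by algebra
qed

theorem theorem3p5:
  fixes a1 a2 k1 k2 b1 b2 r :: real
  assumes "a1 > 0" "a2 > 0" "k1 > 0" "k2 > 0" "b1 \<ge> 0" "b2 \<ge> 0" "r > 0"
    and "\<not> strongly_observable a1 a2 k1 k2 b1 b2 r"
  shows "a1 = a2 \<and> b1 = b2 \<and> k1 = k2"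
proof -
  obtain X1 X2 S Y1 Y2 S2 where
    solX: "batch_solution a1 a2 k1 k2 b1 b2 X1 X2 S" and
    solY: "batch_solution a1 a2 k1 k2 b1 b2 Y1 Y2 S2" and
    neq: "(X1 0, X2 0, S 0) \<noteq> (Y1 0, Y2 0, S2 0)" and
    eqS: "\<And>t. t \<in> {0..r} \<Longrightarrow> S t = S2 t"
    using assms(8) unfolding strongly_observable_def by blast
  define DX1 where "DX1 t = (a1 * S t / (k1 + S t) - b1) * X1 t" for t
  define DX2 where "DX2 t = (a2 * S t / (k2 + S t) - b2) * X2 t" for t
  define DS where "DS t = - (a1 * S t / (k1 + S t)) * X1 t - (a2 * S t / (k2 + S t)) * X2 t" for t
  define DY1 where "DY1 t = (a1 * S2 t / (k1 + S2 t) - b1) * Y1 t" for t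
  define DY2 where "DY2 t = (a2 * S2 t / (k2 + S2 t) - b2) * Y2 t" for t
  define DS2 where "DS2 t = - (a1 * S2 t / (k1 + S2 t)) * Y1 t - (a2 * S2 t / (k2 + S2 t)) * Y2 t" for t
  have Xall: "X1 t > 0 \<and> X2 t > 0 \<and> S t > 0 \<and>
     (X1 has_real_derivative DX1 t) (at t within {0..}) \<and>
     (X2 has_real_derivative DX2 t) (at t within {0..}) \<and>
     (S has_real_derivative DS t) (at t within {0..})" if "t \<ge> 0" for t
    using solX that unfolding batch_solution_def DX1_def DX2_def DS_def by blast
  have Yall: "Y1 t > 0 \<and> Y2 t > 0 \<and> S2 t > 0 \<and>
     (Y1 has_real_derivative DY1 t) (at t within {0..}) \<and>
     (Y2 has_real_derivative DY2 t) (at t within {0..}) \<and>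
     (S2 has_real_derivative DS2 t) (at t within {0..})" if "t \<ge> 0" for t
    using solY that unfolding batch_solution_def DY1_def DY2_def DS2_def by blast
  have pos: "X1 t > 0" "X2 t > 0" "S t > 0" "Y1 t > 0" "Y2 t > 0" "S2 t > 0" if "t \<ge> 0" for t
    using Xall[OF that] Yall[OF that] by blast+
  have wX1: "(X1 has_real_derivative DX1 t) (at t within {0..})"
   and wX2: "(X2 has_real_derivative DX2 t) (at t within {0..})"
   and wS: "(S has_real_derivative DS t) (at t within {0..})"
   and wY1: "(Y1 has_real_derivative DY1 t) (at t within {0..})"
   and wY2: "(Y2 has_real_derivative DY2 t) (at t within {0..})"
   and wS2: "(S2 has_real_derivative DS2 t) (at t within {0..})" if "t \<ge> 0" for t
    using Xall[OF that] Yall[OF that] by blast+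
  have dX1: "(X1 has_real_derivative DX1 t) (at t)" and dX2: "(X2 has_real_derivative DX2 t) (at t)"
    and dS: "(S has_real_derivative DS t) (at t)"
    and dY1: "(Y1 has_real_derivative DY1 t) (at t)" and dY2: "(Y2 has_real_derivative DY2 t) (at t)"
    and dS2: "(S2 has_real_derivative DS2 t) (at t)" if "t > 0" for t
    using that by (intro within_to_at wX1 wX2 wS wY1 wY2 wS2; simp)+
  have c1: "\<forall>t\<in>{0..r}. Y1 t = (Y1 0 / X1 0) * X1 t"
  proof (rule ratio_const[where g="\<lambda>\<sigma>. a1*\<sigma>/(k1+\<sigma>) - b1"])
    show "\<And>t. 0 \<le> t \<Longrightarrow> 0 < X1 t" by (rule pos)
    show "\<And>t. 0 \<le> t \<Longrightarrow> (X1 has_real_derivative (a1 * S t / (k1 + S t) - b1) * X1 t) (at t within {0..})"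
      using wX1 unfolding DX1_def .
    show "\<And>t. 0 \<le> t \<Longrightarrow> (Y1 has_real_derivative (a1 * S2 t / (k1 + S2 t) - b1) * Y1 t) (at t within {0..})"
      using wY1 unfolding DY1_def .
  qed (use eqS assms(7) in auto)
  have c2: "\<forall>t\<in>{0..r}. Y2 t = (Y2 0 / X2 0) * X2 t"
  proof (rule ratio_const[where g="\<lambda>\<sigma>. a2*\<sigma>/(k2+\<sigma>) - b2"])
    show "\<And>t. 0 \<le> t \<Longrightarrow> 0 < X2 t" by (rule pos)
    show "\<And>t. 0 \<le> t \<Longrightarrow> (X2 has_real_derivative (a2 * S t / (k2 + S t) - b2) * X2 t) (at t within {0..})"
      using wX2 unfolding DX2_def .
    show "\<And>t. 0 \<le> t \<Longrightarrow> (Y2 has_real_derivative (a2 * S2 t / (k2 + S2 t) - b2) * Y2 t) (at t within {0..})"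
      using wY2 unfolding DY2_def .
  qed (use eqS assms(7) in auto)
  define C1 where "C1 = Y1 0 / X1 0"
  define C2 where "C2 = Y2 0 / X2 0"
  have key1: "(a1 * S t / (k1 + S t)) * (1 - C1) * X1 t + (a2 * S t / (k2 + S t)) * (1 - C2) * X2 t = 0"
    if t: "t \<in> {0<..<r}" for t
  proof -
    have "DS t = DS2 t"
    proof (rule deriv_eq_open[of "{0<..<r}" t S S2])
      show "S u = S2 u" if "u \<in> {0<..<r}" for u using that by (intro eqS) simp
      show "(S has_real_derivative DS t) (at t)" using t by (intro dS) simp
      show "(S2 has_real_derivative DS2 t) (at t)" using t by (intro dS2) simp
    qed (use t in simp_all)
    moreover have tt: "t \<in> {0..r}" using t by simp
    moreover have "S2 t = S t" using eqS[OF tt] by simp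
    moreover have "Y1 t = C1 * X1 t" using bspec[OF c1 tt] unfolding C1_def .
    moreover have "Y2 t = C2 * X2 t" using bspec[OF c2 tt] unfolding C2_def .
    ultimately show ?thesis unfolding DS_def DS2_def
      by (simp add: algebra_simps diff_divide_distrib; linarith)
  qed
  have f1pos: "a1 * S t / (k1 + S t) > 0" and f2pos: "a2 * S t / (k2 + S t) > 0" if "t \<ge> 0" for t
    using pos(3)[OF that] assms(1-4) by simp_all
  define t0 where "t0 = r / 2"
  have t0: "t0 \<in> {0<..<r}" using assms(7) unfolding t0_def by simp
  have C1ne: "C1 \<noteq> 1" and C2ne: "C2 \<noteq> 1"
  proof -
    have k0: "(a1 * S t0 / (k1 + S t0)) * (1 - C1) * X1 t0 + (a2 * S t0 / (k2 + S t0)) * (1 - C2) * X2 t0 = 0"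
      using key1[OF t0] .
    have t0p: "t0 \<ge> 0" using t0 by simp
    have both: "C1 = 1 \<longleftrightarrow> C2 = 1"
      using k0 f1pos[OF t0p] f2pos[OF t0p] pos(1,2)[OF t0p] by auto
    have "\<not> (C1 = 1 \<and> C2 = 1)"
    proof
      assume h: "C1 = 1 \<and> C2 = 1"
      have "Y1 0 = X1 0" using h pos(1)[of 0] unfolding C1_def by (simp add: field_simps)
      moreover have "Y2 0 = X2 0" using h pos(2)[of 0] unfolding C2_def by (simp add: field_simps)
      moreover have "S2 0 = S 0" using eqS[of 0] assms(7) by simp
      ultimately show False using neq by simp
    qed
    then show "C1 \<noteq> 1" "C2 \<noteq> 1" using both by auto
  qed
  define L where "L = - (1 - C1) / (1 - C2)"
  have rel: "a2 * X2 t * (k1 + S t) = L * a1 * (k2 + S t) * X1 t" if t: "t \<in> {0<..<r}" for t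
    unfolding L_def
    by (rule algA1[OF _ assms(3,4) C2ne key1[OF t]]) (use pos(3)[of t] t in simp)
  have Lpos: "L > 0"
  proof -
    have t0p: "t0 \<ge> 0" using t0 by simp
    have "a2 * X2 t0 * (k1 + S t0) > 0" using pos[OF t0p] assms by simp
    then have "L * (a1 * (k2 + S t0) * X1 t0) > 0" using rel[OF t0] by (simp add: mult.assoc)
    moreover have "a1 * (k2 + S t0) * X1 t0 > 0" using pos[OF t0p] assms by simp
    ultimately show ?thesis by (simp add: zero_less_mult_iff)
  qed
  have key2: "(k1 - k2) * DS t = (b1 - b2) * (k1 + S t) * (k2 + S t) + S t * (a2 * (k1 + S t) - a1 * (k2 + S t))"
    if t: "t \<in> {0<..<r}" for t
  proof -
    have tp: "t > 0" using t by simp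
    have "a2 * (DX2 t * (k1 + S t) + X2 t * DS t) = L * a1 * (DS t * X1 t + (k2 + S t) * DX1 t)"
    proof (rule deriv_eq_open[of "{0<..<r}" t "\<lambda>t. a2 * X2 t * (k1 + S t)" "\<lambda>t. L * a1 * (k2 + S t) * X1 t"])
      show "((\<lambda>t. a2 * X2 t * (k1 + S t)) has_real_derivative a2 * (DX2 t * (k1 + S t) + X2 t * DS t)) (at t)"
        using dX2[OF tp] dS[OF tp] by (auto intro!: derivative_eq_intros simp: algebra_simps)
      show "((\<lambda>t. L * a1 * (k2 + S t) * X1 t) has_real_derivative L * a1 * (DS t * X1 t + (k2 + S t) * DX1 t)) (at t)"
        using dX1[OF tp] dS[OF tp] by (auto intro!: derivative_eq_intros simp: algebra_simps)
    qed (use t rel in auto)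
    then show ?thesis unfolding DX1_def DX2_def
      by (intro algA2[OF _ assms(3,4,1) _ Lpos rel[OF t]]) (use pos[of t] tp in \<open>auto simp: algebra_simps\<close>)
  qed
  have DSneg: "DS t < 0" if "t \<ge> 0" for t
  proof -
    have "a1 * S t / (k1 + S t) * X1 t > 0" "a2 * S t / (k2 + S t) * X2 t > 0"
      by (rule mult_pos_pos[OF f1pos[OF that] pos(1)[OF that]],
          rule mult_pos_pos[OF f2pos[OF that] pos(2)[OF that]])
    then show ?thesis unfolding DS_def by simp
  qed
  have decr: "S v < S u" if "0 < u" "u < v" for u v
  proof -
    have "S u > S v"
    proof (rule DERIV_neg_imp_decreasing[OF that(2)])
      fix x assume "u \<le> x" "x \<le> v"
      then have "x > 0" using that by simp
      then show "\<exists>y. DERIV S x :> y \<and> y < 0" using dS DSneg by (intro exI[of _ "DS x"]) simp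
    qed
    then show ?thesis .
  qed
  have injS: "inj_on S {0<..<r}"
  proof (rule inj_onI)
    fix u v assume u: "u \<in> {0<..<r}" and v: "v \<in> {0<..<r}" and e: "S u = S v"
    show "u = v"
    proof (rule ccontr)
      assume "u \<noteq> v"
      then consider "u < v" | "v < u" by linarith
      then show False using decr[of u v] decr[of v u] u v e by (cases; simp)
    qed
  qed
  define p0 where "p0 = (b1 - b2) * k1 * k2"
  define p1 where "p1 = (b1 - b2) * (k1 + k2) + a2 * k1 - a1 * k2"
  define p2 where "p2 = (b1 - b2) + a2 - a1"
  have Pform: "(b1 - b2) * (k1 + \<sigma>) * (k2 + \<sigma>) + \<sigma> * (a2 * (k1 + \<sigma>) - a1 * (k2 + \<sigma>))
      = p0 + p1 * \<sigma> + p2 * \<sigma>^2" for \<sigma> :: real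
    unfolding p0_def p1_def p2_def by (simp add: algebra_simps power2_eq_square)
  have key3: "(k1 - k2) * DS t = p0 + p1 * S t + p2 * (S t)^2" if "t \<in> {0<..<r}" for t
    using key2[OF that] Pform[of "S t"] by simp
  have aux: "(- F) * x - L * F * x = - (1 + L) * F * x" for F x :: real by (simp add: algebra_simps)
  have DSL: "DS t = - (1 + L) * (a1 * S t / (k1 + S t)) * X1 t" if t: "t \<in> {0<..<r}" for t
  proof -
    have h: "a2 * S t / (k2 + S t) * X2 t = L * (a1 * S t / (k1 + S t)) * X1 t"
      using algA3[OF pos(3)[of t] assms(3,4) rel[OF t]] t by simp
    have "DS t = (- (a1 * S t / (k1 + S t))) * X1 t - L * (a1 * S t / (k1 + S t)) * X1 t"
      unfolding DS_def h by simp
    also have "\<dots> = - (1 + L) * (a1 * S t / (k1 + S t)) * X1 t" by (rule aux)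
    finally show ?thesis .
  qed
  show ?thesis
  proof (cases "k1 = k2")
    case True
    have "[:p0, p1, p2:] = 0"
    proof (rule poly_zero_inj[OF assms(7) injS])
      fix t assume "t \<in> {0<..<r}"
      then show "poly [:p0, p1, p2:] (S t) = 0" using key3[of t] True
        by (simp add: algebra_simps power2_eq_square)
    qed
    then have "p0 = 0" "p2 = 0" by simp_all
    then have "b1 = b2" using assms(3,4) unfolding p0_def by simp
    then show ?thesis using \<open>p2 = 0\<close> True unfolding p2_def by simp
  next
    case False
    define c where "c = k1 - k2"
    have c: "c \<noteq> 0" using False unfolding c_def by simp
    have q0: "k1 * (p0 + p1 * S t + p2 * (S t)^2) + c * a1 * (S t)^2 - c * b1 * S t * (k1 + S t) - S t * (k1 + S t) * (p1 + 2 * p2 * S t) = 0"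
      if t: "t \<in> {0<..<r}" for t
    proof -
      have tp: "t > 0" using t by simp
      have H1: "DS t = - (1 + L) * (a1 * S t / (k1 + S t)) * X1 t" by (rule DSL[OF t])
      have H2: "c * DS t = p0 + p1 * S t + p2 * (S t)^2" using key3[OF t] unfolding c_def .
      have nz: "k1 + S t \<noteq> 0" using pos(3)[of t] tp assms(3) by simp
      have df: "((\<lambda>t. a1 * S t / (k1 + S t)) has_real_derivative
          ((a1 * DS t) * (k1 + S t) - a1 * S t * (0 + DS t)) / ((k1 + S t) * (k1 + S t))) (at t)"
        by (rule DERIV_divide[OF DERIV_cmult[OF dS[OF tp]] DERIV_add[OF DERIV_const dS[OF tp]] nz])
      have H3: "- (1 + L) * (a1 * S t / (k1 + S t) * DX1 t +
          ((a1 * DS t) * (k1 + S t) - a1 * S t * (0 + DS t)) / ((k1 + S t) * (k1 + S t)) * X1 t)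
          = (p1 + 2 * p2 * S t) * DS t / c"
      proof (rule deriv_eq_open[of "{0<..<r}" t "\<lambda>t. - (1 + L) * (a1 * S t / (k1 + S t) * X1 t)"
              "\<lambda>t. (p0 + p1 * S t + p2 * (S t)^2) / c"])
        show "((\<lambda>t. - (1 + L) * (a1 * S t / (k1 + S t) * X1 t)) has_real_derivative
            - (1 + L) * (a1 * S t / (k1 + S t) * DX1 t +
          ((a1 * DS t) * (k1 + S t) - a1 * S t * (0 + DS t)) / ((k1 + S t) * (k1 + S t)) * X1 t)) (at t)"
          by (rule DERIV_cmult[OF DERIV_mult'[OF df dX1[OF tp]]])
        show "((\<lambda>t. (p0 + p1 * S t + p2 * (S t)^2) / c) has_real_derivative (p1 + 2 * p2 * S t) * DS t / c) (at t)"
          using dS[OF tp] c by (auto intro!: derivative_eq_intros simp: field_simps)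
        show "- (1 + L) * (a1 * S u / (k1 + S u) * X1 u) = (p0 + p1 * S u + p2 * (S u)^2) / c"
          if u: "u \<in> {0<..<r}" for u
        proof -
          have "DS u = - (1 + L) * (a1 * S u / (k1 + S u)) * X1 u" by (rule DSL[OF u])
          moreover have "c * DS u = p0 + p1 * S u + p2 * (S u)^2" using key3[OF u] unfolding c_def .
          ultimately show ?thesis using c by (simp add: field_simps)
        qed
      qed (use t in auto)
      have tnn: "t \<ge> 0" using tp by simp
      show ?thesis
        by (rule algA4[OF pos(3)[OF tnn] assms(3,1) pos(1)[OF tnn] Lpos c H1 H2 H3[unfolded DX1_def]])
    qed
    have "[:k1 * p0, - c * b1 * k1, c * a1 - c * b1 - p1 - k1 * p2, - 2 * p2:] = 0"
    proof (rule poly_zero_inj[OF assms(7) injS])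
      fix t assume "t \<in> {0<..<r}"
      then show "poly [:k1 * p0, - c * b1 * k1, c * a1 - c * b1 - p1 - k1 * p2, - 2 * p2:] (S t) = 0"
        using q0[of t] by (simp add: algebra_simps power2_eq_square)
    qed
    then have z: "k1 * p0 = 0" "- c * b1 * k1 = 0" "- 2 * p2 = 0" by simp_all
    then have "p0 = 0" "b1 = 0" "p2 = 0" using c assms(3) by simp_all
    then have bb: "b2 = 0" using assms(3,4) unfolding p0_def by simp
    then have aa: "a2 = a1" using \<open>p2 = 0\<close> \<open>b1 = 0\<close> unfolding p2_def by simp
    have "c * DS t0 = c * (a1 * S t0)"
      using key3[OF t0] \<open>p0 = 0\<close> \<open>p2 = 0\<close> \<open>b1 = 0\<close> bb aa unfolding c_def p1_def
      by (simp add: algebra_simps)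
    then have "DS t0 = a1 * S t0" using c by simp
    moreover have "a1 * S t0 > 0" using pos(3)[of t0] t0 assms(1) by simp
    moreover have "DS t0 < 0" using DSneg t0 by simp
    ultimately show ?thesis by simp
  qed
qed

end
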